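(* Let $\phi:\mathbb{R}\to\mathbb{R}$ be differentiable and $f(z)=W_d\phi(W_{d-1}\phi(W_{d-2}\cdots\phi(W_1z)\cdots))$ with $W_i\in\mathbb{R}^{k_i\times k_{i-1}}$, $k_d=k_0$, $z\in\mathbb{R}^{k_0}$. Let $x\in\mathbb{R}^{k_0}$ and run gradient descent with learning rate $\gamma>0$ on $\mathcal{L}(x,f)=\frac12\|x-f(x)\|_2^2$ (jointly over all $W_1,\dots,W_d$). If $W_d^{(0)}=x{a^{(0)}}^T$ and $W_1^{(0)}=b^{(0)}x^T$ with $a^{(0)}\in\mathbb{R}^{k_{d-1}}$, $b^{(0)}\in\mathbb{R}^{k_1}$, then for all time steps $t$ there exist $a^{(t)}\in\mathbb{R}^{k_{d-1}}$, $b^{(t)}\in\mathbb{R}^{k_1}$ with $W_d^{(t)}=x{a^{(t)}}^T$ and $W_1^{(t)}=b^{(t)}x^T$.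
   Context: $\phi$ is applied coordinatewise. Gradient descent updates each $W_i\leftarrow W_i-\gamma\nabla_{W_i}\mathcal{L}$ simultaneously; the intermediate layers $W_2,\dots,W_{d-1}$ are initialized arbitrarily. *)

theory Defs
  imports "HOL-Analysis.Analysis"
begin

text \<open>Vectors are functions nat => real (entries 0..n-1 relevant); a matrix with m columns
is nat => nat => real; the weights of the network are W :: nat => nat => nat => real,
where W i is the matrix W_i of size k i x k (i-1), for i = 1..d.\<close>

definition matvec :: "(nat \<Rightarrow> nat \<Rightarrow> real) \<Rightarrow> nat \<Rightarrow> (nat \<Rightarrow> real) \<Rightarrow> (nat \<Rightarrow> real)" where
  "matvec M m v = (\<lambda>r. \<Sum>c<m. M r c * v c)"

fun pre :: "(real \<Rightarrow> real) \<Rightarrow> (nat \<Rightarrow> nat) \<Rightarrow> (nat \<Rightarrow> nat \<Rightarrow> nat \<Rightarrow> real) \<Rightarrow> (nat \<Rightarrow> real) \<Rightarrow> nat \<Rightarrow> (nat \<Rightarrow> real)" where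
  "pre phi k W z 0 = z"
| "pre phi k W z (Suc 0) = matvec (W 1) (k 0) z"
| "pre phi k W z (Suc (Suc n)) = matvec (W (Suc (Suc n))) (k (Suc n)) (\<lambda>j. phi (pre phi k W z (Suc n) j))"

definition net :: "(real \<Rightarrow> real) \<Rightarrow> (nat \<Rightarrow> nat) \<Rightarrow> nat \<Rightarrow> (nat \<Rightarrow> nat \<Rightarrow> nat \<Rightarrow> real) \<Rightarrow> (nat \<Rightarrow> real) \<Rightarrow> (nat \<Rightarrow> real)" where
  "net phi k d W z = pre phi k W z d"

definition loss :: "(real \<Rightarrow> real) \<Rightarrow> (nat \<Rightarrow> nat) \<Rightarrow> nat \<Rightarrow> (nat \<Rightarrow> real) \<Rightarrow> (nat \<Rightarrow> nat \<Rightarrow> nat \<Rightarrow> real) \<Rightarrow> real" where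
  "loss phi k d x W = (1/2) * (\<Sum>r<k 0. (x r - net phi k d W x r)^2)"

definition grad_entry :: "(real \<Rightarrow> real) \<Rightarrow> (nat \<Rightarrow> nat) \<Rightarrow> nat \<Rightarrow> (nat \<Rightarrow> real) \<Rightarrow> (nat \<Rightarrow> nat \<Rightarrow> nat \<Rightarrow> real) \<Rightarrow> nat \<Rightarrow> nat \<Rightarrow> nat \<Rightarrow> real" where
  "grad_entry phi k d x W i r c =
     deriv (\<lambda>s. loss phi k d x (W(i := (W i)(r := (W i r)(c := s))))) (W i r c)"

definition gd_step :: "(real \<Rightarrow> real) \<Rightarrow> (nat \<Rightarrow> nat) \<Rightarrow> nat \<Rightarrow> (nat \<Rightarrow> real) \<Rightarrow> real \<Rightarrow> (nat \<Rightarrow> nat \<Rightarrow> nat \<Rightarrow> real) \<Rightarrow> (nat \<Rightarrow> nat \<Rightarrow> nat \<Rightarrow> real)" where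
  "gd_step phi k d x \<gamma> W = (\<lambda>i r c. W i r c - \<gamma> * grad_entry phi k d x W i r c)"

end

theory Submission
  imports Defs
begin

lemma pre_indep: "n < i \<Longrightarrow> pre phi k (W(i:=M)) z n = pre phi k W z n"
  by (induction phi k W z n rule: pre.induct) auto

fun post :: "(real \<Rightarrow> real) \<Rightarrow> (nat \<Rightarrow> nat) \<Rightarrow> (nat \<Rightarrow> nat \<Rightarrow> nat \<Rightarrow> real) \<Rightarrow> (nat \<Rightarrow> real) \<Rightarrow> nat \<Rightarrow> (nat \<Rightarrow> real)" where
  "post phi k W v 0 = v"
| "post phi k W v (Suc 0) = v"
| "post phi k W v (Suc (Suc n)) = matvec (W (Suc (Suc n))) (k (Suc n)) (\<lambda>j. phi (post phi k W v (Suc n) j))"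

lemma pre_post: "n \<ge> 1 \<Longrightarrow> pre phi k W z n = post phi k W (matvec (W 1) (k 0) z) n"
  by (induction phi k W z n rule: pre.induct) auto

lemma post_indep: "post phi k (W(1:=M)) v n = post phi k W v n"
  by (induction phi k W v n rule: post.induct) auto

lemma post_diff:
  shows "(\<And>y. phi differentiable (at y)) \<Longrightarrow> n \<ge> 1 \<Longrightarrow> (\<lambda>u. post phi k W (v(r:=u)) n j) differentiable (at u0)"
proof (induction phi k W v n arbitrary: j rule: post.induct)
  case (1 phi k W v)
  then show ?case by simp
next
  case (2 phi k W v)
  show ?case by (cases "j = r") auto
next
  case (3 phi k W v n)
  have h: "(\<lambda>u. phi (post phi k W (v(r:=u)) (Suc n) j')) differentiable (at u0)" for j'
  proof -
    have ih: "(\<lambda>u. post phi k W (v(r:=u)) (Suc n) j') differentiable (at u0)"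
      by (rule 3(1)) (use 3(2) in simp_all)
    have "(phi \<circ> (\<lambda>u. post phi k W (v(r:=u)) (Suc n) j')) differentiable (at u0)"
      by (rule differentiable_chain_at[OF ih 3(2)])
    then show ?thesis by (simp add: o_def)
  qed
  show ?case unfolding post.simps matvec_def
    apply (rule differentiable_sum)
     apply simp
    apply (rule ballI)
    apply (rule differentiable_mult[OF differentiable_const h])
    done
qed

lemma sum_upd:
  fixes f h :: "nat \<Rightarrow> real"
  assumes "c < m"
  shows "(\<Sum>c'<m. (f(c:=s)) c' * h c') = (\<Sum>c'<m. f c' * h c') + (s - f c) * h c"
proof -
  have "(\<Sum>c'<m. (f(c:=s)) c' * h c') = (\<Sum>c'<m. f c' * h c' + (if c' = c then (s - f c) * h c else 0))"
    by (rule sum.cong) (auto simp: left_diff_distrib)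
  also have "\<dots> = (\<Sum>c'<m. f c' * h c') + (s - f c) * h c"
    using assms by (simp add: sum.distrib)
  finally show ?thesis .
qed

lemma grad_last:
  assumes d2: "d \<ge> 2" and kd: "k d = k 0"
    and rc: "r < k d" "c < k (d - 1)"
  shows "grad_entry phi k d x W d r c =
     - (x r - net phi k d W x r) * phi (pre phi k W x (d - 1) c)"
proof -
  obtain n where dn: "d = Suc (Suc n)" using d2 by (metis add_2_eq_Suc le_Suc_ex)
  define h where "h = (\<lambda>j. phi (pre phi k W x (d - 1) j))"
  define W' where "W' = (\<lambda>s. W(d := (W d)(r := (W d r)(c := s))))"
  define e where "e = (\<lambda>r'. x r' - net phi k d W x r')"
  define S where "S = (\<Sum>r'\<in>{..<k 0} - {r}. (e r')^2)"
  define s0 where "s0 = W d r c"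
  have preW': "pre phi k (W' s) x (d - 1) = pre phi k W x (d - 1)" for s
    unfolding W'_def using pre_indep[of "d - 1" d] dn by simp
  have netW': "net phi k d (W' s) x r' = net phi k d W x r' + (if r' = r then (s - s0) * h c else 0)" for s r'
  proof -
    have "net phi k d (W' s) x r' = (\<Sum>c'<k (d - 1). W' s d r' c' * h c')"
      using preW'[of s] unfolding net_def h_def by (simp add: dn matvec_def)
    moreover have "net phi k d W x r' = (\<Sum>c'<k (d - 1). W d r' c' * h c')"
      unfolding net_def h_def by (simp add: dn matvec_def)
    ultimately show ?thesis
      using sum_upd[OF rc(2), of "W d r" s h] unfolding W'_def s0_def by auto
  qed
  have L: "loss phi k d x (W' s) = 1/2 * (S + (e r - (s - s0) * h c)^2)" for s
  proof -
    have "loss phi k d x (W' s) = 1/2 * (\<Sum>r'<k 0. (e r' - (if r' = r then (s - s0) * h c else 0))^2)"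
      unfolding loss_def e_def netW' by (simp add: algebra_simps)
    also have "(\<Sum>r'<k 0. (e r' - (if r' = r then (s - s0) * h c else 0))^2)
       = (e r - (s - s0) * h c)^2 + (\<Sum>r'\<in>{..<k 0} - {r}. (e r' - (if r' = r then (s - s0) * h c else 0))^2)"
      using rc kd by (subst sum.remove[of _ r]) auto
    also have "(\<Sum>r'\<in>{..<k 0} - {r}. (e r' - (if r' = r then (s - s0) * h c else 0))^2) = S"
      unfolding S_def by (rule sum.cong) auto
    finally show ?thesis by simp
  qed
  have D: "((\<lambda>s. 1/2 * (S + (e r - (s - s0) * h c)^2)) has_real_derivative (- e r * h c)) (at s0)"
    by (auto intro!: derivative_eq_intros)
  have Lf: "(\<lambda>s. loss phi k d x (W' s)) = (\<lambda>s. 1/2 * (S + (e r - (s - s0) * h c)^2))"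
    by (rule ext) (rule L)
  have "grad_entry phi k d x W d r c = deriv (\<lambda>s. loss phi k d x (W' s)) s0"
    unfolding grad_entry_def W'_def s0_def by simp
  also have "\<dots> = deriv (\<lambda>s. 1/2 * (S + (e r - (s - s0) * h c)^2)) s0"
    by (simp only: Lf)
  also have "\<dots> = - e r * h c" using DERIV_imp_deriv[OF D] .
  finally show ?thesis unfolding e_def h_def by simp
qed

lemma grad_first:
  assumes diff: "\<And>y. phi differentiable (at y)" and d2: "d \<ge> 2"
  shows "\<exists>D. \<forall>c<k 0. grad_entry phi k d x W 1 r c = D * x c"
proof -
  define v where "v = matvec (W 1) (k 0) x"
  define G where "G = (\<lambda>u. (1/2::real) * (\<Sum>r'<k 0. (x r' - post phi k W (v(r:=u)) d r')^2))"
  have sq: "(\<lambda>u. (x r' - post phi k W (v(r := u)) d r')^2) differentiable (at (v r))" for r'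
    by (rule differentiable_power, rule differentiable_diff, rule differentiable_const,
        rule post_diff) (use d2 diff in auto)
  have Gd: "G differentiable (at (v r))"
    unfolding G_def
    by (intro differentiable_sum differentiable_mult differentiable_const differentiable_diff) (auto intro: sq)
  define D where "D = deriv G (v r)"
  have GD: "(G has_real_derivative D) (at (v r))"
    unfolding D_def using Gd DERIV_deriv_iff_real_differentiable by blast
  have "grad_entry phi k d x W 1 r c = D * x c" if c: "c < k 0" for c
  proof -
    define s0 where "s0 = W 1 r c"
    define W' where "W' = (\<lambda>s. W(1 := (W 1)(r := (W 1 r)(c := s))))"
    have mv: "matvec (W' s 1) (k 0) x = v(r := v r + (s - s0) * x c)" for s
    proof
      fix r'
      show "matvec (W' s 1) (k 0) x r' = (v(r := v r + (s - s0) * x c)) r'"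
        using sum_upd[OF c, of "W 1 r" s x] unfolding W'_def v_def matvec_def s0_def by auto
    qed
    have Lw: "loss phi k d x (W' s) = G (v r + (s - s0) * x c)" for s
    proof -
      have "net phi k d (W' s) x = post phi k W (v(r := v r + (s - s0) * x c)) d"
        unfolding net_def using pre_post[of d phi k "W' s" x] d2 mv[of s] post_indep
        unfolding W'_def by simp
      then show ?thesis unfolding loss_def G_def by simp
    qed
    have inner: "((\<lambda>s. v r + (s - s0) * x c) has_real_derivative x c) (at s0)"
      by (auto intro!: derivative_eq_intros)
    have "((\<lambda>s. G (v r + (s - s0) * x c)) has_real_derivative D * x c) (at s0)"
    proof -
      have GD': "(G has_real_derivative D) (at ((\<lambda>s. v r + (s - s0) * x c) s0))"
        using GD by simp
      show ?thesis using DERIV_chain2[OF GD' inner] .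
    qed
    then have "deriv (\<lambda>s. G (v r + (s - s0) * x c)) s0 = D * x c"
      by (rule DERIV_imp_deriv)
    moreover have "grad_entry phi k d x W 1 r c = deriv (\<lambda>s. G (v r + (s - s0) * x c)) s0"
      unfolding grad_entry_def s0_def[symmetric] using Lw unfolding W'_def by simp
    ultimately show ?thesis by simp
  qed
  then show ?thesis by blast
qed

theorem mainTheorem9:
  fixes phi :: "real \<Rightarrow> real" and k :: "nat \<Rightarrow> nat" and d :: nat
    and x :: "nat \<Rightarrow> real" and \<gamma> :: real
    and Wt :: "nat \<Rightarrow> nat \<Rightarrow> nat \<Rightarrow> nat \<Rightarrow> real"
    and a0 b0 :: "nat \<Rightarrow> real"
  assumes diff: "\<And>y. phi differentiable (at y)"
    and d2: "d \<ge> 2"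
    and kd: "k d = k 0"
    and lr: "\<gamma> > 0"
    and init_d: "\<forall>r<k d. \<forall>c<k (d - 1). Wt 0 d r c = x r * a0 c"
    and init_1: "\<forall>r<k 1. \<forall>c<k 0. Wt 0 1 r c = b0 r * x c"
    and gd: "\<And>t. Wt (Suc t) = gd_step phi k d x \<gamma> (Wt t)"
  shows "\<forall>t. \<exists>a b :: nat \<Rightarrow> real.
           (\<forall>r<k d. \<forall>c<k (d - 1). Wt t d r c = x r * a c) \<and>
           (\<forall>r<k 1. \<forall>c<k 0. Wt t 1 r c = b r * x c)"
proof
  fix t
  show "\<exists>a b :: nat \<Rightarrow> real.
           (\<forall>r<k d. \<forall>c<k (d - 1). Wt t d r c = x r * a c) \<and>
           (\<forall>r<k 1. \<forall>c<k 0. Wt t 1 r c = b r * x c)"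
  proof (induction t)
    case 0
    then show ?case using init_d init_1 by blast
  next
    case (Suc t)
    then obtain a b where ha: "\<forall>r<k d. \<forall>c<k (d - 1). Wt t d r c = x r * a c"
      and hb: "\<forall>r<k 1. \<forall>c<k 0. Wt t 1 r c = b r * x c" by blast
    define W where "W = Wt t"
    define h where "h = (\<lambda>j. phi (pre phi k W x (d - 1) j))"
    define S where "S = (\<Sum>c'<k (d - 1). a c' * h c')"
    obtain n where dn: "d = Suc (Suc n)" using d2 by (metis add_2_eq_Suc le_Suc_ex)
    have netr: "net phi k d W x r = x r * S" if "r < k d" for r
    proof -
      have "net phi k d W x r = (\<Sum>c'<k (d - 1). W d r c' * h c')"
        unfolding net_def h_def by (simp add: dn matvec_def)
      also have "\<dots> = (\<Sum>c'<k (d - 1). x r * (a c' * h c'))"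
        using ha that unfolding W_def by (intro sum.cong) auto
      finally show ?thesis unfolding S_def by (simp add: sum_distrib_left)
    qed
    have "\<exists>Df. \<forall>r c. c < k 0 \<longrightarrow> grad_entry phi k d x W 1 r c = Df r * x c"
      using grad_first[OF diff d2, of k x W] by metis
    then obtain Df where Df: "\<And>r c. c < k 0 \<Longrightarrow> grad_entry phi k d x W 1 r c = Df r * x c" by blast
    have A: "\<forall>r<k d. \<forall>c<k (d - 1). Wt (Suc t) d r c = x r * (a c + \<gamma> * (1 - S) * h c)"
    proof (intro allI impI)
      fix r c assume rc: "r < k d" "c < k (d - 1)"
      have g: "grad_entry phi k d x W d r c = - (x r - x r * S) * h c"
        using grad_last[OF d2 kd rc, of phi x W] netr[OF rc(1)] unfolding h_def by simp
      have "Wt (Suc t) d r c = W d r c - \<gamma> * grad_entry phi k d x W d r c"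
        unfolding gd gd_step_def W_def by simp
      also have "\<dots> = x r * a c + \<gamma> * (x r - x r * S) * h c"
        unfolding g using ha rc unfolding W_def by (simp add: algebra_simps)
      finally show "Wt (Suc t) d r c = x r * (a c + \<gamma> * (1 - S) * h c)"
        by (simp add: algebra_simps)
    qed
    have B: "\<forall>r<k 1. \<forall>c<k 0. Wt (Suc t) 1 r c = (b r - \<gamma> * Df r) * x c"
    proof (intro allI impI)
      fix r c assume rc: "r < k 1" "c < k 0"
      have "Wt (Suc t) 1 r c = W 1 r c - \<gamma> * grad_entry phi k d x W 1 r c"
        unfolding gd gd_step_def W_def by simp
      then show "Wt (Suc t) 1 r c = (b r - \<gamma> * Df r) * x c"
        using Df[OF rc(2)] hb rc unfolding W_def by (simp add: algebra_simps)
    qed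
    show ?case
      by (intro exI[of _ "\<lambda>c. a c + \<gamma> * (1 - S) * h c"] exI[of _ "\<lambda>r. b r - \<gamma> * Df r"])
        (use A B in auto)
  qed
qed

end
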